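(* Let $m=2^{l_m}$ with $l_m\ge1$, let $(v_0,\dots,v_{m-1})$ be a Cantor basis of $\mathbb{F}_{2^m}$, let $0\le l<m/2$, $n=m\cdot 2^l$ and $n_p=n/m=2^l$. Define the $\mathbb{F}_2$-linear map $E_\Sigma:\mathbb{F}_2[x]_{<n}\to\mathbb{F}_{2^m}^{\,n_p}$ by $$E_\Sigma(A)=\bigl(A(v_{l+m/2}+u)\bigr)_{u\in V_l}$$ (i.e. evaluation of $A$, viewed as a polynomial over $\mathbb{F}_{2^m}$, at the $n_p$ points of $\Sigma=v_{l+m/2}+V_l$). Then $E_\Sigma$ is a bijection between $\mathbb{F}_2[x]_{<n}$ and $\mathbb{F}_{2^m}^{\,n_p}$.
   Context: A Cantor basis of $\mathbb{F}_{2^m}$ (for $m$ a power of $2$) is an $\mathbb{F}_2$-basis $(v_0,\dots,v_{m-1})$ of $\mathbb{F}_{2^m}$ with $v_0=1$ and $v_i^2+v_i=v_{i-1}$ for $0<i<m$. For $0\le i\le m$ let $V_0=\{0\}$ and $V_i=\mathrm{span}_{\mathbb{F}_2}\{v_0,\dots,v_{i-1}\}$. $\mathbb{F}_2[x]_{<n}$ denotes the polynomials over $\mathbb{F}_2$ of degree less than $n$. *)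

theory Defs
  imports "HOL-Computational_Algebra.Polynomial" "HOL-Library.FuncSet"
begin

text \<open>F_2 is the prime subfield {0,1} of the ambient field 'a = F_{2^m}.
  The F_2-span of v_0..v_{i-1} (V_i; V_0 = {0}).\<close>
definition span2 :: "(nat \<Rightarrow> 'a::field) \<Rightarrow> nat \<Rightarrow> 'a set" where
  "span2 v i = {(\<Sum>j\<in>S. v j) | S. S \<subseteq> {..<i}}"

text \<open>(v_0,...,v_{m-1}) is an F_2-basis of 'a: each element of 'a is a unique
  F_2-linear combination, i.e. a sum over a unique subset of indices.\<close>
definition F2_basis :: "(nat \<Rightarrow> 'a::field) \<Rightarrow> nat \<Rightarrow> bool" where
  "F2_basis v m \<longleftrightarrow> bij_betw (\<lambda>S. \<Sum>j\<in>S. v j) (Pow {..<m}) (UNIV :: 'a set)"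

definition cantor_basis :: "(nat \<Rightarrow> 'a::field) \<Rightarrow> nat \<Rightarrow> bool" where
  "cantor_basis v m \<longleftrightarrow> F2_basis v m \<and> v 0 = 1 \<and>
     (\<forall>i. 0 < i \<and> i < m \<longrightarrow> v i ^ 2 + v i = v (i - 1))"

text \<open>F_2[x]_{<n}, viewed inside 'a[x]: coefficients in {0,1}, degree < n.\<close>
definition F2_polys_lt :: "nat \<Rightarrow> 'a::field poly set" where
  "F2_polys_lt n = {A. (\<forall>i. coeff A i \<in> {0, 1}) \<and> (A = 0 \<or> degree A < n)}"

end

theory Submission
  imports Defs "HOL-Number_Theory.Residues"
begin

hide_const (open) UnivPoly.coeff UnivPoly.monom
lemma char2:
  assumes "card (UNIV :: 'a::{finite,field} set) = 2 ^ m" "m \<ge> 1"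
  shows "(2::'a) = 0"
proof -
  have "CHAR('a) dvd 2 ^ m" using CHAR_dvd_CARD[where 'a='a] assms by simp
  moreover have "prime CHAR('a)"
    using prime_CHAR_semidom[where ?'a = 'a] finite_imp_CHAR_pos[where 'a='a] by auto
  ultimately have "CHAR('a) = 2"
  proof -
    have "CHAR('a) dvd 2" using \<open>CHAR('a) dvd 2 ^ m\<close> \<open>prime CHAR('a)\<close> prime_dvd_power by blast
    then show ?thesis using \<open>prime CHAR('a)\<close> by (metis prime_nat_iff two_is_prime_nat prime_gt_1_nat less_irrefl)
  qed
  then show ?thesis using of_nat_CHAR[where 'a='a] by simp
qed
locale ch2 = fixes dummy :: "'a::field itself"
  assumes two: "(2::'a) = 0"
begin

lemma add_self[simp]: "x + x = (0::'a)"
  by (metis mult_2 mult_zero_left two)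

lemma neg_eq: "- x = (x::'a)"
  using add_self[of x] by (metis add_eq_0_iff)

lemma sq_add: "(x + y)^2 = x^2 + (y::'a)^2"
  by (simp add: power2_sum two)

lemma pow2k_add: "(x + y)^(2^k) = x^(2^k) + (y::'a)^(2^k)"
proof (induction k)
  case 0 then show ?case by simp
next
  case (Suc k)
  have "(x + y)^(2^Suc k) = ((x+y)^(2^k))^2" by (simp add: power_mult[symmetric] mult.commute)
  also have "\<dots> = (x^(2^k))^2 + (y^(2^k))^2" using Suc by (simp add: sq_add)
  also have "\<dots> = x^(2^Suc k) + y^(2^Suc k)" by (simp add: power_mult[symmetric] mult.commute)
  finally show ?case .
qed

lemma eq_iff_add0: "(x::'a) = y \<longleftrightarrow> x + y = 0"
  by (metis add_self add_eq_0_iff neg_eq)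

lemma pow2k_inj: "x^(2^k) = (y::'a)^(2^k) \<Longrightarrow> x = y"
  by (metis eq_iff_add0 pow2k_add power_eq_0_iff)

lemma sum_sq: "finite A \<Longrightarrow> (\<Sum>i\<in>A. f i)^2 = (\<Sum>i\<in>A. (f i :: 'a)^2)"
  by (induction A rule: finite_induct) (auto simp: sq_add)

lemma poly_sq:
  assumes "\<forall>i. coeff C i \<in> {0, 1::'a}"
  shows "poly C (x^2) = (poly C x)^2"
proof -
  have c: "coeff C i ^ 2 = coeff C i" for i using assms[rule_format, of i] by auto
  have "(poly C x)^2 = (\<Sum>i\<le>degree C. (coeff C i * x ^ i)^2)"
    by (simp add: poly_altdef sum_sq)
  also have "\<dots> = (\<Sum>i\<le>degree C. coeff C i * (x^2) ^ i)"
    by (intro sum.cong refl) (simp add: power_mult_distrib c power_mult[symmetric] mult.commute)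
  also have "\<dots> = poly C (x^2)" by (simp add: poly_altdef)
  finally show ?thesis by simp
qed

lemma poly_pow2k:
  assumes "\<forall>i. coeff C i \<in> {0, 1::'a}"
  shows "poly C (x^(2^k)) = (poly C x)^(2^k)"
proof (induction k)
  case 0 then show ?case by simp
next
  case (Suc k)
  have "poly C (x^(2^Suc k)) = poly C ((x^(2^k))^2)" by (simp add: power_mult[symmetric] mult.commute)
  also have "\<dots> = (poly C (x^(2^k)))^2" by (rule poly_sq[OF assms])
  also have "\<dots> = (poly C x)^(2^Suc k)" using Suc by (simp add: power_mult[symmetric] mult.commute)
  finally show ?case .
qed

definition s :: "'a \<Rightarrow> 'a" where "s x = x^2 + x"

lemma s_add: "s (x + y) = s x + s y"
  by (simp add: s_def sq_add algebra_simps)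

lemma s0[simp]: "s 0 = 0" by (simp add: s_def)
lemma s1[simp]: "s 1 = 0" by (simp add: s_def)

lemma sk_add: "(s^^k) (x + y) = (s^^k) x + (s^^k) y"
  by (induction k) (auto simp: s_add)

lemma sk0[simp]: "(s^^k) 0 = 0"
  by (induction k) auto

lemma sk1: "k > 0 \<Longrightarrow> (s^^k) 1 = 0"
  by (cases k) (auto simp: funpow_Suc_right simp del: funpow.simps)

lemma sk_sum: "finite A \<Longrightarrow> (s^^k) (\<Sum>i\<in>A. f i) = (\<Sum>i\<in>A. (s^^k) (f i))"
  by (induction A rule: finite_induct) (auto simp: sk_add)

lemma s_pow: "s (x^(2^j)) = (s x)^(2^j)"
  by (simp add: s_def pow2k_add power_mult[symmetric] mult.commute)

lemma sk_pow: "(s^^k) (x^(2^j)) = ((s^^k) x)^(2^j)"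
  by (induction k) (auto simp: s_pow)

lemma sk_pow2: "(s^^(2^t)) x = x^(2^(2^t)) + x"
proof (induction t arbitrary: x)
  case 0 then show ?case by (simp add: s_def)
next
  case (Suc t)
  have "(s^^(2^Suc t)) x = (s^^(2^t)) ((s^^(2^t)) x)"
    by (simp add: funpow_add mult_2)
  also have "\<dots> = (x^(2^(2^t)) + x)^(2^(2^t)) + (x^(2^(2^t)) + x)" by (simp add: Suc)
  also have "\<dots> = x^(2^(2^t) * 2^(2^t)) + x"
    by (simp add: pow2k_add power_mult[symmetric] add.assoc[symmetric] two)
  also have "2^(2^t) * 2^(2^t) = (2::nat)^(2^Suc t)" by (simp add: power_add[symmetric] mult_2)
  finally show ?case .
qed

lemma sk_v:
  assumes rec: "\<forall>i. 0 < i \<and> i < m \<longrightarrow> v i ^ 2 + v i = (v (i - 1) :: 'a)"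
  shows "i + k < m \<Longrightarrow> (s^^k) (v (i + k)) = v i"
proof (induction k arbitrary: i)
  case 0 then show ?case by simp
next
  case (Suc k)
  have "s (v (i + Suc k)) = v (i + k)"
    using rec[rule_format, of "i + Suc k"] Suc.prems by (simp add: s_def)
  then have "(s^^Suc k) (v (i + Suc k)) = (s^^k) (v (i + k))"
    by (simp add: funpow_Suc_right del: funpow.simps)
  also have "\<dots> = v i" using Suc by simp
  finally show ?case .
qed

lemma pow_add_fix: "(c::'a)^(2^a) = c \<Longrightarrow> c^(2^(a+b)) = c^(2^b)"
  by (metis power_add power_mult)

lemma pow_mult_fix: "(c::'a)^(2^p) = c \<Longrightarrow> c^(2^(k*p)) = c"
proof (induction k)
  case 0 then show ?case by simp
next
  case (Suc k)
  then show ?case using pow_add_fix[of c p "k*p"] by (simp add: add.commute)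
qed

lemma period:
  assumes m: "(c::'a)^(2^(2^lm)) = c" and h: "c^(2^(2^(lm-1))) \<noteq> c" and "lm \<ge> 1"
    and d: "0 < d" "d < 2^lm"
  shows "c^(2^d) \<noteq> c"
proof
  assume cd: "c^(2^d) = c"
  define p where "p = (LEAST e. 0 < e \<and> c^(2^e) = c)"
  have pP: "0 < p \<and> c^(2^p) = c" unfolding p_def by (rule LeastI[of _ d]) (use d cd in auto)
  have pmin: "\<And>e. 0 < e \<Longrightarrow> c^(2^e) = c \<Longrightarrow> p \<le> e" unfolding p_def by (rule Least_le) auto
  have "p \<le> d" using pmin d cd by auto
  let ?M = "2^lm::nat"
  have "?M = (?M div p) * p + ?M mod p" by simp
  then have "c^(2^(?M mod p)) = c"
    using m pow_add_fix[OF pow_mult_fix[OF conjunct2[OF pP], of "?M div p"], of "?M mod p"] by simp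
  moreover have "?M mod p < p" using pP by simp
  ultimately have "?M mod p = 0" using pmin by (meson leD neq0_conv)
  then have "p dvd 2^lm" by auto
  then obtain i where i: "i \<le> lm" "p = 2^i" using divides_primepow_nat[of 2 p lm] by auto
  have "i < lm" using i \<open>p \<le> d\<close> d by (metis le_less_trans nat_less_le power_strict_increasing_iff one_less_numeral_iff semiring_norm(76) antisym_conv2)
  then have "p dvd 2^(lm-1)" using i by (simp add: le_imp_power_dvd)
  then obtain k where "2^(lm-1) = k * p" by (metis dvdE mult.commute)
  then have "c^(2^(2^(lm-1))) = c" using pow_mult_fix[OF conjunct2[OF pP]] by simp
  then show False using h by simp
qed

end

lemma F2_coeff_hi:
  assumes "A \<in> F2_polys_lt n" "n \<le> i" shows "coeff A i = 0"
  using assms unfolding F2_polys_lt_def by (auto intro: coeff_eq_0)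

lemma card_F2_polys:
  "card (F2_polys_lt n :: 'a::field poly set) = 2 ^ n"
proof -
  define g :: "nat set \<Rightarrow> 'a poly" where "g T = (\<Sum>i\<in>T. monom 1 i)" for T
  have cg: "finite T \<Longrightarrow> coeff (g T) i = (if i \<in> T then 1 else 0)" for T i
    by (simp add: g_def coeff_sum coeff_monom)
  have inj: "inj_on g (Pow {..<n})"
  proof (rule inj_onI)
    fix T T' assume T: "T \<in> Pow {..<n}" "T' \<in> Pow {..<n}" "g T = g T'"
    have "finite T" "finite T'" using T finite_subset by auto
    then have "\<forall>i. (i \<in> T) = (i \<in> T')" using T(3) cg
      by (metis zero_neq_one)
    then show "T = T'" by auto
  qed
  have img: "g ` Pow {..<n} = F2_polys_lt n"
  proof
    show "g ` Pow {..<n} \<subseteq> F2_polys_lt n"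
    proof
      fix A :: "'a poly" assume "A \<in> g ` Pow {..<n}"
      then obtain T where T: "T \<subseteq> {..<n}" "A = g T" by auto
      have fT: "finite T" using T finite_subset by auto
      have "\<forall>i. coeff A i \<in> {0,1}" using cg[OF fT] T by auto
      moreover have "A = 0 \<or> degree A < n"
      proof (cases "A = 0")
        case False
        then have "coeff A (degree A) \<noteq> 0" by simp
        then have "degree A \<in> T" using cg[OF fT] T by (auto split: if_splits)
        then show ?thesis using T by auto
      qed simp
      ultimately show "A \<in> F2_polys_lt n" unfolding F2_polys_lt_def by auto
    qed
  next
    show "F2_polys_lt n \<subseteq> g ` Pow {..<n}"
    proof
      fix A :: "'a poly" assume A: "A \<in> F2_polys_lt n"
      define T where "T = {i. coeff A i = 1}"
      have "T \<subseteq> {..<n}" unfolding T_def using F2_coeff_hi[OF A]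
        by (auto simp: not_less[symmetric]) (metis not_less zero_neq_one)
      moreover have "g T = A"
      proof (rule poly_eqI)
        fix i
        have fT: "finite T" using \<open>T \<subseteq> {..<n}\<close> finite_subset by auto
        show "coeff (g T) i = coeff A i"
          using A cg[OF fT, of i] unfolding F2_polys_lt_def T_def by auto
      qed
      ultimately show "A \<in> g ` Pow {..<n}" by auto
    qed
  qed
  have "card (F2_polys_lt n :: 'a poly set) = card (Pow {..<n})"
    using card_image[OF inj] img by simp
  also have "\<dots> = 2^n" by (simp add: card_Pow)
  finally show ?thesis .
qed

theorem proposition2:
  fixes v :: "nat \<Rightarrow> 'a::{finite,field}"
    and m lm l n np :: nat
  assumes "card (UNIV :: 'a set) = 2 ^ m"
    and "m = 2 ^ lm" and "lm \<ge> 1"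
    and "cantor_basis v m"
    and "l < m div 2"
    and "n = m * 2 ^ l" and "np = n div m"
  shows "bij_betw (\<lambda>A. \<lambda>u\<in>span2 v l. poly A (v (l + m div 2) + u))
           (F2_polys_lt n) (span2 v l \<rightarrow>\<^sub>E (UNIV :: 'a set))
         \<and> card (span2 v l) = np"
proof -
  note cardU = assms(1) and mdef = assms(2) and lm1 = assms(3) and lh = assms(5)
    and ndef = assms(6) and npdef = assms(7)
  have m1: "m \<ge> 1" using mdef by simp
  interpret ch2 "TYPE('a)" by standard (rule char2[OF cardU m1])
  have bas: "bij_betw (\<lambda>S. \<Sum>j\<in>S. v j) (Pow {..<m}) (UNIV :: 'a set)"
    and v0: "v 0 = 1" and rec: "\<forall>i. 0 < i \<and> i < m \<longrightarrow> v i ^ 2 + v i = v (i - 1)"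
    using assms(4) unfolding cantor_basis_def F2_basis_def by auto
  define h where "h = m div 2"
  have hpow: "h = 2^(lm-1)" using mdef lm1 unfolding h_def
    by (metis One_nat_def Suc_pred diff_Suc_1 nonzero_mult_div_cancel_left numeral_2_eq_2 power_Suc zero_less_one less_le_trans zero_neq_numeral)
  have mh: "m = 2 * h" using mdef lm1 hpow by (metis One_nat_def Suc_pred less_le_trans power_Suc zero_less_one)
  have h0: "h > 0" using hpow by simp
  define w where "w = v (l + h)"
  define c where "c = v h"
  define S where "S = s^^l"
  have Sspan: "S u = 0" if uin: "u \<in> span2 v l" for u
  proof -
    obtain T where T: "T \<subseteq> {..<l}" "u = (\<Sum>j\<in>T. v j)" using uin unfolding span2_def by auto
    have "S (v j) = 0" if "j \<in> T" for j
    proof -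
      have j: "j < l" using T that by auto
      have "S (v j) = (s^^(l-j)) ((s^^j) (v (0 + j)))" unfolding S_def
        using j by (metis add.left_neutral comp_apply funpow_add le_add_diff_inverse2 less_imp_le)
      also have "(s^^j) (v (0 + j)) = 1" using sk_v[OF rec, of 0 j] j lh v0 unfolding h_def by simp
      finally show ?thesis using sk1 j by simp
    qed
    moreover have "finite T" using T finite_subset by auto
    ultimately show ?thesis unfolding T(2) S_def by (simp add: sk_sum)
  qed
  have Sw: "S w = c" unfolding S_def w_def c_def
    using sk_v[OF rec, of h l] lh mh unfolding h_def by (simp add: add.commute)
  have Swu: "S (w + u) = c" if "u \<in> span2 v l" for u
    using Sspan[OF that] Sw unfolding S_def by (simp add: sk_add)
  have sh: "(s^^h) c = 1" using sk_v[OF rec, of 0 h] mh h0 v0 unfolding c_def by simp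
  have c1: "c^(2^(2^(lm-1))) \<noteq> c"
  proof
    assume "c^(2^(2^(lm-1))) = c"
    then have "(s^^h) c = 0" using sk_pow2[of "lm-1" c] hpow by simp
    then show False using sh by simp
  qed
  have c2: "c^(2^(2^lm)) = c"
  proof -
    have "(s^^m) c = (s^^h) ((s^^h) c)" using mh by (simp add: funpow_add mult_2)
    also have "\<dots> = 0" using sh sk1 h0 by simp
    finally show ?thesis using sk_pow2[of lm c] mdef eq_iff_add0 by simp
  qed
  have cdist: "c^(2^d) \<noteq> c" if "0 < d" "d < m" for d
    using period[OF c2 c1 lm1] that mdef by simp
  define g where "g = (\<lambda>(u, k). (w + u)^(2^k))"
  have Sg: "S (g (u,k)) = c^(2^k)" if "u \<in> span2 v l" for u k
    using Swu[OF that] unfolding g_def S_def by (simp add: sk_pow)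
  have ginj: "inj_on g (span2 v l \<times> {..<m})"
  proof (rule inj_onI, clarify)
    fix u k u' k' assume u: "u \<in> span2 v l" "k < m" "u' \<in> span2 v l" "k' < m" and e: "g (u,k) = g (u',k')"
    have ce: "c^(2^k) = c^(2^k')" using Sg[OF u(1)] Sg[OF u(3)] e by metis
    have kk: "k = k'" if "k \<le> k'" "c^(2^k) = c^(2^k')" "k' < m" for k k'
    proof (rule ccontr)
      assume "k \<noteq> k'"
      have "c^(2^k') = (c^(2^(k'-k)))^(2^k)" using \<open>k \<le> k'\<close>
        by (metis le_add_diff_inverse2 power_add power_mult)
      then have "c^(2^(k'-k)) = c" using that(2) pow2k_inj by metis
      then show False using cdist[of "k'-k"] that \<open>k \<noteq> k'\<close> by simp
    qed
    have "k = k'" using kk[of k k'] kk[of k' k] ce u by (cases "k \<le> k'") auto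
    then have "w + u = w + u'" using e pow2k_inj unfolding g_def by (metis case_prod_conv)
    then show "u = u' \<and> k = k'" using \<open>k = k'\<close> by simp
  qed
  have inj_span: "inj_on (\<lambda>S. \<Sum>j\<in>S. v j) (Pow {..<l})"
  proof -
    have "l < m" using lh by simp
    then show ?thesis using bij_betw_imp_inj_on[OF bas] by (rule_tac inj_on_subset) auto
  qed
  have span_img: "span2 v l = (\<lambda>S. \<Sum>j\<in>S. v j) ` Pow {..<l}" unfolding span2_def by auto
  have cspan: "card (span2 v l) = 2^l"
    using card_image[OF inj_span] span_img by (simp add: card_Pow)
  have fspan: "finite (span2 v l)" by simp
  define E where "E = (\<lambda>A. \<lambda>u\<in>span2 v l. poly A (v (l + m div 2) + u))"
  have Einj: "inj_on E (F2_polys_lt n)"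
  proof (rule inj_onI)
    fix A B :: "'a poly" assume A: "A \<in> F2_polys_lt n" and B: "B \<in> F2_polys_lt n" and e: "E A = E B"
    have ev: "poly A (w + u) = poly B (w + u)" if "u \<in> span2 v l" for u
      using fun_cong[OF e, of u] that unfolding E_def w_def h_def by simp
    define C where "C = A - B"
    have cC: "\<forall>i. coeff C i \<in> {0, 1}"
    proof
      fix i
      have "coeff A i \<in> {0,1}" "coeff B i \<in> {0,1}" using A B unfolding F2_polys_lt_def by auto
      then show "coeff C i \<in> {0,1}" unfolding C_def using neg_eq[of 1] by auto
    qed
    have Chi: "coeff C i = 0" if "n \<le> i" for i
      unfolding C_def using F2_coeff_hi[OF A that] F2_coeff_hi[OF B that] by simp
    show "A = B"
    proof (rule ccontr)
      assume "A \<noteq> B"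
      then have C0: "C \<noteq> 0" unfolding C_def by simp
      have dC: "degree C < n"
      proof (rule ccontr)
        assume "\<not> degree C < n"
        then have "coeff C (degree C) = 0" using Chi by simp
        then show False using C0 by simp
      qed
      have sub: "g ` (span2 v l \<times> {..<m}) \<subseteq> {x. poly C x = 0}"
      proof clarify
        fix u k assume "u \<in> span2 v l" "k < m"
        then have "poly C (w + u) = 0" using ev unfolding C_def by simp
        then show "poly C (g (u,k)) = 0" unfolding g_def using poly_pow2k[OF cC] by simp
      qed
      have cgn: "card (g ` (span2 v l \<times> {..<m})) = n"
        using card_image[OF ginj] cspan ndef by (simp add: card_cartesian_product)
      have "n \<le> card {x. poly C x = 0}"
        using card_mono[OF poly_roots_finite[OF C0] sub] cgn by simp
      also have "\<dots> \<le> degree C" by (rule card_poly_roots_bound[OF C0])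
      finally show False using dC by simp
    qed
  qed
  have Esub: "E ` F2_polys_lt n \<subseteq> span2 v l \<rightarrow>\<^sub>E (UNIV :: 'a set)"
    unfolding E_def by auto
  have "card (E ` F2_polys_lt n) = 2^n" using card_image[OF Einj] card_F2_polys by simp
  moreover have "card (span2 v l \<rightarrow>\<^sub>E (UNIV :: 'a set)) = 2^n"
    using cspan cardU ndef by (simp add: card_PiE power_mult)
  ultimately have "E ` F2_polys_lt n = span2 v l \<rightarrow>\<^sub>E (UNIV :: 'a set)"
    using Esub by (intro card_subset_eq) (auto intro: finite_PiE)
  then have "bij_betw E (F2_polys_lt n) (span2 v l \<rightarrow>\<^sub>E (UNIV :: 'a set))"
    using Einj unfolding bij_betw_def by simp
  moreover have "card (span2 v l) = np" using cspan npdef ndef mdef by simp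
  ultimately show ?thesis unfolding E_def by simp
qed

end
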